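(* Let $k$ be a field of characteristic $0$ and let $\mathcal L$ be a Lie torus of type $(\Delta,\Lambda)$ over $k$. Suppose $\alpha\in\Delta^\times$, $0\neq x\in\mathcal L_\alpha$, $0\neq y\in\mathcal L_{-\alpha}$ and $[x,y]\in\mathcal L_0^0$. Then there is $\lambda\in\Lambda$ with $x\in\mathcal L_\alpha^\lambda$ and $y\in\mathcal L_{-\alpha}^{-\lambda}$.
   Context: An irreducible finite root system in a finite-dimensional $k$-vector space $\mathcal X$ is a finite subset $\Delta\subset\mathcal X$ with $0\in\Delta$ such that $\Delta^\times:=\Delta\setminus\{0\}$ is an irreducible (possibly non-reduced) finite root system in the usual sense. Write $Q=\mathrm{span}_{\mathbb Z}(\Delta)$, $\alpha^\vee$ for the coroot of $\alpha\in\Delta^\times$, $\langle\beta,\alpha^\vee\rangle$ for the natural pairing, and $\Delta^\times_{\mathrm{ind}}=\Delta^\times\setminus 2\Delta^\times$. Let $\Lambda$ be a finitely generated free abelian group. A Lie torus of type $(\Delta,\Lambda)$ is a Lie algebra $\mathcal L$ over $k$ with a $Q\times\Lambda$-grading $\mathcal L=\bigoplus_{(\alpha,\lambda)\in Q\times\Lambda}\mathcal L_\alpha^\lambda$ (with $\mathcal L_\alpha:=\bigoplus_\lambda\mathcal L_\alpha^\lambda$, $\mathcal L^\lambda:=\bigoplus_\alpha\mathcal L_\alpha^\lambda$) such that: (LT1) $\{\alpha\in Q:\mathcal L_\alpha\neq0\}=\Delta$; (LT2)(i) $\mathcal L_\alpha^0\neq0$ for all $\alpha\in\Delta^\times_{\mathrm{ind}}$;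 (ii) whenever $\alpha\in\Delta^\times$ and $\mathcal L_\alpha^\lambda\neq0$ there exist $e\in\mathcal L_\alpha^\lambda$, $f\in\mathcal L_{-\alpha}^{-\lambda}$ with $\mathcal L_\alpha^\lambda=ke$, $\mathcal L_{-\alpha}^{-\lambda}=kf$ and $[[e,f],x]=\langle\beta,\alpha^\vee\rangle x$ for all $x\in\mathcal L_\beta$, $\beta\in Q$; (LT3) $\mathcal L$ is generated as an algebra by the $\mathcal L_\alpha$, $\alpha\in\Delta^\times$; (LT4) $\Lambda$ is generated by $\{\lambda:\mathcal L^\lambda\neq0\}$. *)

theory Defs
  imports Complex_Main
begin

definition root_system_usual :: "('k::field \<Rightarrow> 'x::ab_group_add \<Rightarrow> 'x) \<Rightarrow> 'x set \<Rightarrow> bool" where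
  "root_system_usual scX R \<longleftrightarrow>
     vector_space scX \<and> finite R \<and> 0 \<notin> R \<and> module.span scX R = UNIV \<and>
     (\<forall>\<alpha>\<in>R. \<exists>f. Vector_Spaces.linear scX (*) f \<and> f \<alpha> = 2 \<and>
        (\<lambda>\<beta>. \<beta> - scX (f \<beta>) \<alpha>) ` R = R \<and> (\<forall>\<beta>\<in>R. f \<beta> \<in> \<int>))"

definition irreducible_root_system_usual :: "('k::field \<Rightarrow> 'x::ab_group_add \<Rightarrow> 'x) \<Rightarrow> 'x set \<Rightarrow> bool" where
  "irreducible_root_system_usual scX R \<longleftrightarrow>
     root_system_usual scX R \<and> R \<noteq> {} \<and>
     \<not> (\<exists>X1 X2. module.subspace scX X1 \<and> module.subspace scX X2 \<and>
            X1 \<noteq> {0} \<and> X2 \<noteq> {0} \<and> X1 \<inter> X2 = {0} \<and>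
            {a + b | a b. a \<in> X1 \<and> b \<in> X2} = UNIV \<and> R \<subseteq> X1 \<union> X2)"

definition irreducible_finite_root_system :: "('k::field \<Rightarrow> 'x::ab_group_add \<Rightarrow> 'x) \<Rightarrow> 'x set \<Rightarrow> bool" where
  "irreducible_finite_root_system scX D \<longleftrightarrow>
     finite D \<and> 0 \<in> D \<and> irreducible_root_system_usual scX (D - {0})"

text \<open>The coroot of alpha (unique for a root system), as a linear functional X \<rightarrow> k.\<close>
definition coroot :: "('k::field \<Rightarrow> 'x::ab_group_add \<Rightarrow> 'x) \<Rightarrow> 'x set \<Rightarrow> 'x \<Rightarrow> ('x \<Rightarrow> 'k)" where
  "coroot scX D \<alpha> = (SOME f. Vector_Spaces.linear scX (*) f \<and> f \<alpha> = 2 \<and>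
        (\<lambda>\<beta>. \<beta> - scX (f \<beta>) \<alpha>) ` (D - {0}) = D - {0} \<and> (\<forall>\<beta>\<in>D - {0}. f \<beta> \<in> \<int>))"

definition root_lattice :: "('k::field \<Rightarrow> 'x::ab_group_add \<Rightarrow> 'x) \<Rightarrow> 'x set \<Rightarrow> 'x set" where
  "root_lattice scX D = {\<Sum>v\<in>D. scX (of_int (c v)) v | c. True}"

definition roots_ind :: "('k::field \<Rightarrow> 'x::ab_group_add \<Rightarrow> 'x) \<Rightarrow> 'x set \<Rightarrow> 'x set" where
  "roots_ind scX D = (D - {0}) - {scX 2 \<beta> | \<beta>. \<beta> \<in> D - {0}}"

definition zsc :: "int \<Rightarrow> 'g::ab_group_add \<Rightarrow> 'g" where
  "zsc n g = (if 0 \<le> n then (\<Sum>_\<in>{..<nat n}. g) else - (\<Sum>_\<in>{..<nat (- n)}. g))"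

definition fg_free_abelian_type :: "'g::ab_group_add itself \<Rightarrow> bool" where
  "fg_free_abelian_type _ \<longleftrightarrow>
     (\<exists>(n::nat) (b::nat \<Rightarrow> 'g). \<forall>g::'g. \<exists>!c::nat \<Rightarrow> int.
        (\<forall>i\<ge>n. c i = 0) \<and> g = (\<Sum>i<n. zsc (c i) (b i)))"

definition lie_algebra :: "('k::field \<Rightarrow> 'L::ab_group_add \<Rightarrow> 'L) \<Rightarrow> ('L \<Rightarrow> 'L \<Rightarrow> 'L) \<Rightarrow> bool" where
  "lie_algebra scL br \<longleftrightarrow> vector_space scL \<and>
     (\<forall>x. Vector_Spaces.linear scL scL (br x)) \<and>
     (\<forall>y. Vector_Spaces.linear scL scL (\<lambda>x. br x y)) \<and>
     (\<forall>x. br x x = 0) \<and>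
     (\<forall>x y z. br x (br y z) + br y (br z x) + br z (br x y) = 0)"

definition graded_decomp :: "('x \<Rightarrow> 'g \<Rightarrow> 'L::ab_group_add set) \<Rightarrow> 'L \<Rightarrow> ('x \<times> 'g \<Rightarrow> 'L) \<Rightarrow> bool" where
  "graded_decomp Lg x c \<longleftrightarrow> finite {p. c p \<noteq> 0} \<and> (\<forall>p. c p \<in> Lg (fst p) (snd p)) \<and>
     x = (\<Sum>p\<in>{p. c p \<noteq> 0}. c p)"

definition is_grading :: "('k::field \<Rightarrow> 'L::ab_group_add \<Rightarrow> 'L) \<Rightarrow> ('L \<Rightarrow> 'L \<Rightarrow> 'L) \<Rightarrow>
    ('x::ab_group_add \<Rightarrow> 'g::ab_group_add \<Rightarrow> 'L set) \<Rightarrow> bool" where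
  "is_grading scL br Lg \<longleftrightarrow>
     (\<forall>a l. module.subspace scL (Lg a l)) \<and>
     (\<forall>x. \<exists>!c. graded_decomp Lg x c) \<and>
     (\<forall>a b l m. \<forall>u\<in>Lg a l. \<forall>v\<in>Lg b m. br u v \<in> Lg (a + b) (l + m))"

definition Lroot :: "('x \<Rightarrow> 'g \<Rightarrow> 'L::ab_group_add set) \<Rightarrow> 'x \<Rightarrow> 'L set" where
  "Lroot Lg a = {x. \<exists>c. graded_decomp Lg x c \<and> (\<forall>p. c p \<noteq> 0 \<longrightarrow> fst p = a)}"

definition Ldeg :: "('x \<Rightarrow> 'g \<Rightarrow> 'L::ab_group_add set) \<Rightarrow> 'g \<Rightarrow> 'L set" where
  "Ldeg Lg l = {x. \<exists>c. graded_decomp Lg x c \<and> (\<forall>p. c p \<noteq> 0 \<longrightarrow> snd p = l)}"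

definition lie_torus :: "('k::field \<Rightarrow> 'x::ab_group_add \<Rightarrow> 'x) \<Rightarrow> 'x set \<Rightarrow>
    ('k \<Rightarrow> 'L::ab_group_add \<Rightarrow> 'L) \<Rightarrow> ('L \<Rightarrow> 'L \<Rightarrow> 'L) \<Rightarrow> ('x \<Rightarrow> 'g::ab_group_add \<Rightarrow> 'L set) \<Rightarrow> bool" where
  "lie_torus scX D scL br Lg \<longleftrightarrow>
     lie_algebra scL br \<and> is_grading scL br Lg \<and>
     \<comment> \<open>the grading group is Q \<times> Lambda\<close>
     (\<forall>a l. a \<notin> root_lattice scX D \<longrightarrow> Lg a l = {0}) \<and>
     \<comment> \<open>(LT1)\<close>
     {a \<in> root_lattice scX D. Lroot Lg a \<noteq> {0}} = D \<and>
     \<comment> \<open>(LT2)(i)\<close>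
     (\<forall>a\<in>roots_ind scX D. Lg a 0 \<noteq> {0}) \<and>
     \<comment> \<open>(LT2)(ii)\<close>
     (\<forall>a\<in>D - {0}. \<forall>l. Lg a l \<noteq> {0} \<longrightarrow>
        (\<exists>e\<in>Lg a l. \<exists>f\<in>Lg (- a) (- l).
           Lg a l = range (\<lambda>t. scL t e) \<and> Lg (- a) (- l) = range (\<lambda>t. scL t f) \<and>
           (\<forall>b\<in>root_lattice scX D. \<forall>x\<in>Lroot Lg b.
               br (br e f) x = scL (coroot scX D a b) x))) \<and>
     \<comment> \<open>(LT3): the smallest subalgebra containing all L_alpha, alpha nonzero root, is L\<close>
     (\<forall>S. module.subspace scL S \<and> (\<forall>u\<in>S. \<forall>v\<in>S. br u v \<in> S) \<and>
          (\<forall>a\<in>D - {0}. Lroot Lg a \<subseteq> S) \<longrightarrow> S = UNIV) \<and>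
     \<comment> \<open>(LT4): Lambda is generated by the support of the Lambda-grading\<close>
     (\<forall>H::'g set. 0 \<in> H \<and> (\<forall>u\<in>H. \<forall>v\<in>H. u - v \<in> H) \<and>
          {l. Ldeg Lg l \<noteq> {0}} \<subseteq> H \<longrightarrow> H = UNIV)"

end

theory Submission
  imports Defs "HOL-Library.List_Lexorder"
begin


lemma lex_add:
  fixes f g h :: "nat \<Rightarrow> int"
  shows "map f xs < map g xs \<Longrightarrow> map (\<lambda>i. f i + h i) xs < map (\<lambda>i. g i + h i) xs"
  by (induction xs) (auto simp: list_less_def)

definition nsc :: "nat \<Rightarrow> 'g::ab_group_add \<Rightarrow> 'g" where
  "nsc k g = (\<Sum>_\<in>{..<k}. g)"

lemma nsc_add: "nsc (a + b) g = nsc a g + nsc b g"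
  by (induction b) (auto simp: nsc_def lessThan_Suc add.assoc)

lemma zsc_diff: "zsc (int a - int b) g = nsc a g - nsc b g"
proof (cases "b \<le> a")
  case True
  then have "a = (a - b) + b" by simp
  then have e: "nsc a g = nsc (a - b) g + nsc b g" by (metis nsc_add)
  have "nat (int a - int b) = a - b" using True by simp
  then have "zsc (int a - int b) g = nsc (a - b) g" using True unfolding zsc_def nsc_def by (simp only: if_P of_nat_mono diff_ge_0_iff_ge)
  then show ?thesis using e by (simp add: algebra_simps)
next
  case False
  then have "b = (b - a) + a" by simp
  then have e: "nsc b g = nsc (b - a) g + nsc a g" by (metis nsc_add)
  have "nat (- (int a - int b)) = b - a" using False by simp
  moreover have "\<not> 0 \<le> int a - int b" using False by simp
  ultimately have "zsc (int a - int b) g = - nsc (b - a) g" unfolding zsc_def nsc_def by (simp only: if_False)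
  then show ?thesis using e by (simp add: algebra_simps)
qed

lemma zsc_add: "zsc (m + n) g = zsc m g + zsc n g"
proof -
  have m: "m = int (nat m) - int (nat (-m))" and n: "n = int (nat n) - int (nat (-n))" by auto
  have mn: "m + n = int (nat m + nat n) - int (nat (-m) + nat (-n))" by auto
  have "zsc (m + n) g = nsc (nat m + nat n) g - nsc (nat (-m) + nat (-n)) g"
    using zsc_diff[of "nat m + nat n" "nat (-m) + nat (-n)" g] by (simp only: mn[symmetric])
  also have "\<dots> = zsc m g + zsc n g"
  proof -
    have zm: "zsc m g = nsc (nat m) g - nsc (nat (-m)) g"
      using zsc_diff[of "nat m" "nat (-m)" g] by (simp only: m[symmetric])
    have zn: "zsc n g = nsc (nat n) g - nsc (nat (-n)) g"
      using zsc_diff[of "nat n" "nat (-n)" g] by (simp only: n[symmetric])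
    show ?thesis unfolding zm zn nsc_add by (simp add: algebra_simps)
  qed
  finally show ?thesis .
qed

lemma exists_order:
  assumes "fg_free_abelian_type TYPE('g::ab_group_add)"
  shows "\<exists>\<phi>::'g \<Rightarrow> int list. inj \<phi> \<and> (\<forall>a b c. \<phi> a < \<phi> b \<longrightarrow> \<phi> (a + c) < \<phi> (b + c))"
proof -
  obtain n and b :: "nat \<Rightarrow> 'g" where nb: "\<And>g::'g. \<exists>!c::nat \<Rightarrow> int.
        (\<forall>i\<ge>n. c i = 0) \<and> g = (\<Sum>i<n. zsc (c i) (b i))"
    using assms unfolding fg_free_abelian_type_def by blast
  define C where "C g = (THE c. (\<forall>i\<ge>n. c i = 0) \<and> g = (\<Sum>i<n. zsc (c i) (b i)))" for g
  have C: "(\<forall>i\<ge>n. C g i = 0) \<and> g = (\<Sum>i<n. zsc (C g i) (b i))" for g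
    unfolding C_def by (rule theI'[OF nb])
  have Cadd: "C (g + h) = (\<lambda>i. C g i + C h i)" for g h
  proof -
    have "(\<forall>i\<ge>n. C g i + C h i = 0) \<and> g + h = (\<Sum>i<n. zsc (C g i + C h i) (b i))"
      using C[of g] C[of h] by (auto simp: zsc_add sum.distrib)
    then show ?thesis unfolding C_def[of "g+h"] by (intro the1_equality[OF nb])
  qed
  define \<phi> where "\<phi> g = map (C g) [0..<n]" for g
  have "inj \<phi>"
  proof
    fix g h assume "\<phi> g = \<phi> h"
    then have "\<forall>i<n. C g i = C h i" unfolding \<phi>_def by (simp add: map_eq_conv)
    have "C g = C h"
    proof
      fix i show "C g i = C h i"
        using C[of g] C[of h] \<open>\<forall>i<n. C g i = C h i\<close> by (cases "i < n") auto
    qed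
    have "g = (\<Sum>i<n. zsc (C g i) (b i))" using C by blast
    also have "\<dots> = (\<Sum>i<n. zsc (C h i) (b i))" using \<open>C g = C h\<close> by simp
    also have "\<dots> = h" using C[of h] by (rule sym[OF conjunct2])
    finally show "g = h" .
  qed
  moreover have "\<phi> (g + k) < \<phi> (h + k)" if "\<phi> g < \<phi> h" for g h k
    using lex_add[OF that[unfolded \<phi>_def], of "C k"] by (simp add: \<phi>_def Cadd)
  ultimately show ?thesis by blast
qed




lemma uniq_ext:
  fixes \<phi> :: "'g::ab_group_add \<Rightarrow> 'o::linorder"
  assumes inj: "inj \<phi>" and mono: "\<forall>a b c. \<phi> a < \<phi> b \<longrightarrow> \<phi> (a + c) < \<phi> (b + c)"
    and le1: "\<phi> l \<le> \<phi> l0" and le2: "\<phi> m \<le> \<phi> m0" and eq: "l + m = l0 + m0"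
  shows "l = l0 \<and> m = m0"
proof -
  have m2: "\<phi> (c + a) < \<phi> (c + b)" if "\<phi> a < \<phi> b" for a b c
    using mono that by (metis add.commute)
  have "\<phi> l = \<phi> l0"
  proof (rule ccontr)
    assume "\<phi> l \<noteq> \<phi> l0"
    then have "\<phi> l < \<phi> l0" using le1 by simp
    then have "\<phi> (l + m) < \<phi> (l0 + m)" using mono by blast
    moreover have "\<phi> (l0 + m) \<le> \<phi> (l0 + m0)"
    proof (cases "\<phi> m = \<phi> m0")
      case True
      then have "m = m0" by (rule injD[OF inj])
      then show ?thesis by simp
    next
      case False
      then have "\<phi> m < \<phi> m0" using le2 by simp
      from m2[OF this] show ?thesis by (rule less_imp_le)
    qed
    ultimately show False using eq by simp
  qed
  then have "l = l0" by (rule injD[OF inj])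
  then show ?thesis using eq by simp
qed

locale LT =
  fixes scX :: "'k::field_char_0 \<Rightarrow> 'x::ab_group_add \<Rightarrow> 'x"
    and D :: "'x set"
    and scL :: "'k \<Rightarrow> 'L::ab_group_add \<Rightarrow> 'L"
    and br :: "'L \<Rightarrow> 'L \<Rightarrow> 'L"
    and Lg :: "'x \<Rightarrow> 'g::ab_group_add \<Rightarrow> 'L set"
  assumes rs: "irreducible_finite_root_system scX D"
    and lt: "lie_torus scX D scL br Lg"
begin

lemma rsu: "root_system_usual scX (D - {0})"
  using rs unfolding irreducible_finite_root_system_def irreducible_root_system_usual_def by blast

lemma vsX: "vector_space scX" using rsu unfolding root_system_usual_def by blast
lemma la: "lie_algebra scL br" using lt unfolding lie_torus_def by blast
lemma vsL: "vector_space scL" using la unfolding lie_algebra_def by blast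
lemma gr: "is_grading scL br Lg" using lt unfolding lie_torus_def by blast

sublocale L: vector_space scL by (rule vsL)
sublocale X: vector_space scX by (rule vsX)

lemma linR: "module_hom scL scL (br u)"
  using la unfolding lie_algebra_def by (simp add: linear_iff_module_hom)
lemma linL: "module_hom scL scL (\<lambda>v. br v u)"
  using la unfolding lie_algebra_def by (simp add: linear_iff_module_hom)

lemma brR_add: "br u (v + w) = br u v + br u w" by (rule module_hom.add[OF linR])
lemma brL_add: "br (v + w) u = br v u + br w u" using module_hom.add[OF linL] by blast
lemma brR_scale: "br u (scL t v) = scL t (br u v)" by (rule module_hom.scale[OF linR])
lemma brL_scale: "br (scL t v) u = scL t (br v u)" using module_hom.scale[OF linL] by blast
lemma brR_zero[simp]: "br u 0 = 0" by (rule module_hom.zero[OF linR])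
lemma brL_zero[simp]: "br 0 u = 0" using module_hom.zero[OF linL] by blast
lemma brR_neg: "br u (- v) = - br u v" by (rule module_hom.neg[OF linR])
lemma brR_sum: "br u (sum g S) = (\<Sum>a\<in>S. br u (g a))" by (rule module_hom.sum[OF linR])
lemma brL_sum: "br (sum g S) u = (\<Sum>a\<in>S. br (g a) u)" using module_hom.sum[OF linL] by blast

lemma br_self: "br u u = 0" using la unfolding lie_algebra_def by blast

lemma br_anti: "br a b = - br b a"
proof -
  have "0 = br (a + b) (a + b)" by (simp add: br_self)
  also have "\<dots> = br a a + br b a + (br a b + br b b)" by (simp only: brR_add brL_add)
  also have "\<dots> = br a b + br b a" by (simp add: br_self)
  finally have "br a b + br b a = 0" by simp
  then show ?thesis by (simp add: eq_neg_iff_add_eq_0)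
qed

lemma jac: "br e (br f w) = br f (br e w) + br (br e f) w"
proof -
  have "br e (br f w) + br f (br w e) + br w (br e f) = 0"
    using la unfolding lie_algebra_def by blast
  moreover have "br f (br w e) = - br f (br e w)" by (metis br_anti brR_neg)
  moreover have "br w (br e f) = - br (br e f) w" by (rule br_anti)
  ultimately show ?thesis by (simp add: algebra_simps)
qed

lemma sub: "L.subspace (Lg a l)" using gr unfolding is_grading_def by blast
lemma uniq: "\<exists>!c. graded_decomp Lg x c" using gr unfolding is_grading_def by blast
lemma brG: "u \<in> Lg a l \<Longrightarrow> v \<in> Lg b m \<Longrightarrow> br u v \<in> Lg (a + b) (l + m)"
  using gr unfolding is_grading_def by blast

lemma zero_Lg[simp]: "0 \<in> Lg a l" by (rule L.subspace_0[OF sub])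

end



context LT begin

lemma Lg_Lroot: assumes "w \<in> Lg a l" shows "w \<in> Lroot Lg a"
proof -
  define c where "c p = (if p = (a, l) then w else 0)" for p
  have fin: "{p. c p \<noteq> 0} \<subseteq> {(a,l)}" by (auto simp: c_def)
  have "graded_decomp Lg w c"
    unfolding graded_decomp_def
  proof (intro conjI allI)
    show "finite {p. c p \<noteq> 0}" using fin finite_subset by blast
    show "c p \<in> Lg (fst p) (snd p)" for p using assms by (auto simp: c_def)
    show "w = sum c {p. c p \<noteq> 0}"
    proof (cases "w = 0")
      case True then show ?thesis by (simp add: c_def)
    next
      case False
      then have "{p. c p \<noteq> 0} = {(a,l)}" by (auto simp: c_def)
      then show ?thesis by (simp add: c_def)
    qed
  qed
  moreover have "\<forall>p. c p \<noteq> 0 \<longrightarrow> fst p = a" by (auto simp: c_def)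
  ultimately show ?thesis unfolding Lroot_def by blast
qed

lemma decomp_root:
  assumes "x \<in> Lroot Lg a"
  obtains xs where "finite {l. xs l \<noteq> 0}" "\<And>l. xs l \<in> Lg a l" "x = (\<Sum>l\<in>{l. xs l \<noteq> 0}. xs l)"
proof -
  obtain c where c: "graded_decomp Lg x c" and ca: "\<forall>p. c p \<noteq> 0 \<longrightarrow> fst p = a"
    using assms unfolding Lroot_def by blast
  define xs where "xs l = c (a, l)" for l
  have eq: "{p. c p \<noteq> 0} = Pair a ` {l. xs l \<noteq> 0}"
  proof
    show "{p. c p \<noteq> 0} \<subseteq> Pair a ` {l. xs l \<noteq> 0}"
    proof
      fix p assume "p \<in> {p. c p \<noteq> 0}"
      then have "c p \<noteq> 0" by simp
      moreover have "fst p = a" using ca \<open>c p \<noteq> 0\<close> by blast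
      ultimately
      show "p \<in> Pair a ` {l. xs l \<noteq> 0}"
        by (intro image_eqI[of _ _ "snd p"]) (auto simp: xs_def)
    qed
    show "Pair a ` {l. xs l \<noteq> 0} \<subseteq> {p. c p \<noteq> 0}" by (auto simp: xs_def)
  qed
  have f: "finite {p. c p \<noteq> 0}" using c unfolding graded_decomp_def by blast
  have "finite {l. xs l \<noteq> 0}"
    using f unfolding eq by (rule finite_imageD) (simp add: inj_on_def)
  moreover have "xs l \<in> Lg a l" for l
    using c unfolding graded_decomp_def xs_def by (metis fst_conv snd_conv)
  moreover have "x = (\<Sum>l\<in>{l. xs l \<noteq> 0}. xs l)"
  proof -
    have "x = sum c {p. c p \<noteq> 0}" using c unfolding graded_decomp_def by blast
    also have "\<dots> = sum c (Pair a ` {l. xs l \<noteq> 0})" using eq by simp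
    also have "\<dots> = (\<Sum>l\<in>{l. xs l \<noteq> 0}. xs l)"
      by (subst sum.reindex) (auto simp: inj_on_def xs_def)
    finally show ?thesis .
  qed
  ultimately show ?thesis using that by blast
qed

lemma indep:
  assumes I: "finite I" and w: "\<And>\<nu>. \<nu> \<in> I \<Longrightarrow> w \<nu> \<in> Lg a \<nu>"
    and s: "(\<Sum>\<nu>\<in>I. w \<nu>) \<in> Lg a0 l0" and \<nu>: "\<nu> \<in> I" and ne: "(a, \<nu>) \<noteq> (a0, l0)"
  shows "w \<nu> = 0"
proof -
  define z where "z = (\<Sum>\<nu>\<in>I. w \<nu>)"
  define c where "c p = (if fst p = a \<and> snd p \<in> I then w (snd p) else 0)" for p
  define c' where "c' p = (if p = (a0, l0) then z else 0)" for p
  have sub1: "{p. c p \<noteq> 0} \<subseteq> Pair a ` I" by (auto simp: c_def image_iff intro: prod_eqI)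
  have d1: "graded_decomp Lg z c"
    unfolding graded_decomp_def
  proof (intro conjI allI)
    show "finite {p. c p \<noteq> 0}" using sub1 I finite_subset by blast
    show "c p \<in> Lg (fst p) (snd p)" for p using w by (auto simp: c_def)
    have "z = sum c (Pair a ` I)"
      unfolding z_def by (subst sum.reindex) (auto simp: inj_on_def c_def)
    also have "\<dots> = sum c {p. c p \<noteq> 0}"
      by (rule sum.mono_neutral_right) (use I sub1 in auto)
    finally show "z = sum c {p. c p \<noteq> 0}" .
  qed
  have d2: "graded_decomp Lg z c'"
    unfolding graded_decomp_def
  proof (intro conjI allI)
    have "{p. c' p \<noteq> 0} \<subseteq> {(a0, l0)}" by (auto simp: c'_def)
    then show "finite {p. c' p \<noteq> 0}" using finite_subset by blast
    show "c' p \<in> Lg (fst p) (snd p)" for p using s by (auto simp: c'_def z_def)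
    show "z = sum c' {p. c' p \<noteq> 0}"
    proof (cases "z = 0")
      case True then show ?thesis by (simp add: c'_def)
    next
      case False
      then have "{p. c' p \<noteq> 0} = {(a0,l0)}" by (auto simp: c'_def)
      then show ?thesis by (simp add: c'_def)
    qed
  qed
  have "c = c'" using uniq[of z] d1 d2 by blast
  then have "c (a, \<nu>) = c' (a, \<nu>)" by simp
  then show ?thesis using \<nu> ne by (auto simp: c_def c'_def)
qed

lemma LT_lat: "\<forall>a l. a \<notin> root_lattice scX D \<longrightarrow> Lg a l = {0}"
  using lt unfolding lie_torus_def by (elim conjE) assumption
lemma LT1: "{a \<in> root_lattice scX D. Lroot Lg a \<noteq> {0}} = D"
  using lt unfolding lie_torus_def by (elim conjE) assumption
lemma LT2: "\<forall>a\<in>D - {0}. \<forall>l. Lg a l \<noteq> {0} \<longrightarrow>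
        (\<exists>e\<in>Lg a l. \<exists>f\<in>Lg (- a) (- l).
           Lg a l = range (\<lambda>t. scL t e) \<and> Lg (- a) (- l) = range (\<lambda>t. scL t f) \<and>
           (\<forall>b\<in>root_lattice scX D. \<forall>x\<in>Lroot Lg b.
               br (br e f) x = scL (coroot scX D a b) x))"
  using lt unfolding lie_torus_def by (elim conjE) assumption

lemma Lg_zero_notD:
  assumes "\<beta> \<notin> D" "w \<in> Lg \<beta> l" shows "w = 0"
proof (cases "\<beta> \<in> root_lattice scX D")
  case True
  have "Lroot Lg \<beta> = {0}" using True assms(1) LT1 by blast
  then show ?thesis using Lg_Lroot[OF assms(2)] by blast
next
  case False
  then have "Lg \<beta> l = {0}" using LT_lat by blast
  then show ?thesis using assms(2) by blast
qed

lemma coroot_props: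
  assumes "\<alpha> \<in> D - {0}"
  shows "module_hom scX (*) (coroot scX D \<alpha>) \<and> coroot scX D \<alpha> \<alpha> = 2"
proof -
  have "\<exists>f. Vector_Spaces.linear scX (*) f \<and> f \<alpha> = 2 \<and>
        (\<lambda>\<beta>. \<beta> - scX (f \<beta>) \<alpha>) ` (D - {0}) = D - {0} \<and> (\<forall>\<beta>\<in>D - {0}. f \<beta> \<in> \<int>)"
    using rsu assms unfolding root_system_usual_def by blast
  from someI_ex[OF this] show ?thesis
    unfolding coroot_def[symmetric] by (simp add: linear_iff_module_hom)
qed

lemma lattice_scale:
  assumes "\<alpha> \<in> D" shows "scX (of_int k) \<alpha> \<in> root_lattice scX D"
proof -
  have fD: "finite D" using rs unfolding irreducible_finite_root_system_def by blast
  have "(\<Sum>v\<in>D. scX (of_int (if v = \<alpha> then k else 0)) v) = (\<Sum>v\<in>D. if v = \<alpha> then scX (of_int k) \<alpha> else 0)"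
    by (rule sum.cong) auto
  also have "\<dots> = scX (of_int k) \<alpha>" using fD assms by simp
  finally show ?thesis unfolding root_lattice_def by (auto intro!: exI[of _ "\<lambda>v. if v = \<alpha> then k else 0"])
qed

end



context LT begin

lemma sl2:
  assumes a: "\<alpha> \<in> D - {0}" and e: "e \<in> Lg \<alpha> lam" and f: "f \<in> Lg (-\<alpha>) (-lam)"
    and hyp: "\<forall>b\<in>root_lattice scX D. \<forall>x\<in>Lroot Lg b. br (br e f) x = scL (coroot scX D \<alpha> b) x"
    and v: "v \<in> Lg (-\<alpha>) \<mu>" and v0: "v \<noteq> 0"
  shows "br e v \<noteq> 0"
proof
  assume ev: "br e v = 0"
  define cr where "cr = coroot scX D \<alpha>"
  have crl: "module_hom scX (*) cr" and cra: "cr \<alpha> = 2"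
    using coroot_props[OF a] unfolding cr_def by auto
  define \<beta> where "\<beta> n = scX (- of_nat (Suc n)) \<alpha>" for n :: nat
  define F where "F n = (br f ^^ n) v" for n
  have F0: "F 0 = v" by (simp add: F_def)
  have FS: "F (Suc n) = br f (F n)" for n by (simp add: F_def)
  have \<beta>0: "\<beta> 0 = - \<alpha>" by (simp add: \<beta>_def)
  have \<beta>S: "\<beta> (Suc n) = - \<alpha> + \<beta> n" for n
  proof -
    have "- (of_nat (Suc (Suc n)) :: 'k) = - 1 + - of_nat (Suc n)" by simp
    then have "\<beta> (Suc n) = scX (- 1) \<alpha> + scX (- of_nat (Suc n)) \<alpha>"
      unfolding \<beta>_def by (simp only: X.scale_left_distrib)
    then show ?thesis by (simp add: \<beta>_def)
  qed
  have Fin: "\<exists>l. F n \<in> Lg (\<beta> n) l" for n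
  proof (induction n)
    case 0 then show ?case using v by (auto simp: F0 \<beta>0)
  next
    case (Suc n)
    then obtain l where "F n \<in> Lg (\<beta> n) l" by blast
    from brG[OF f this] show ?case unfolding FS \<beta>S by blast
  qed
  have aD: "\<alpha> \<in> D" using a by blast
  have wt: "br (br e f) (F n) = scL (- (2 * of_nat (Suc n))) (F n)" for n
  proof -
    obtain l where l: "F n \<in> Lg (\<beta> n) l" using Fin by blast
    show ?thesis
    proof (cases "\<beta> n \<in> root_lattice scX D")
      case True
      then have "br (br e f) (F n) = scL (cr (\<beta> n)) (F n)"
        using hyp Lg_Lroot[OF l] unfolding cr_def by blast
      moreover have "cr (\<beta> n) = - (2 * of_nat (Suc n))"
        unfolding \<beta>_def using module_hom.scale[OF crl] cra by simp
      ultimately show ?thesis by simp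
    next
      case False
      then have "F n = 0" using l LT_lat by blast
      then show ?thesis by simp
    qed
  qed
  have rec: "br e (F (Suc n)) = scL (- of_nat ((n+1)*(n+2))) (F n)" for n
  proof (induction n)
    case 0
    have "br e (F (Suc 0)) = br f (br e v) + br (br e f) v" unfolding FS F0 by (rule jac)
    also have "\<dots> = scL (- 2) v" using wt[of 0] by (simp add: ev F0)
    finally show ?case by (simp add: F0)
  next
    case (Suc n)
    have "br e (F (Suc (Suc n))) = br f (br e (F (Suc n))) + br (br e f) (F (Suc n))"
      unfolding FS[of "Suc n"] by (rule jac)
    also have "\<dots> = scL (- of_nat ((n+1)*(n+2))) (F (Suc n)) + scL (- (2 * of_nat (Suc (Suc n)))) (F (Suc n))"
      by (simp only: Suc.IH wt brR_scale FS[symmetric])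
    also have "\<dots> = scL (- of_nat ((n+1)*(n+2)) + - (2 * of_nat (Suc (Suc n)))) (F (Suc n))"
      by (simp only: L.scale_left_distrib)
    also have "- of_nat ((n+1)*(n+2)) + - (2 * of_nat (Suc (Suc n))) = (- of_nat ((Suc n + 1) * (Suc n + 2)) :: 'k)"
      by (simp add: algebra_simps)
    finally show ?case .
  qed
  have "\<exists>N. F N = 0"
  proof -
    have "inj \<beta>"
    proof
      fix m n assume "\<beta> m = \<beta> n"
      then have "(- of_nat (Suc m) :: 'k) = - of_nat (Suc n)"
        unfolding \<beta>_def using a by (auto dest: X.scale_right_imp_eq)
      then show "m = n" by simp
    qed
    then have "infinite (range \<beta>)" using finite_imageD infinite_UNIV_nat by blast
    moreover have "finite D" using rs unfolding irreducible_finite_root_system_def by blast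
    ultimately obtain N where "\<beta> N \<notin> D" by (meson finite_subset image_subsetI)
    moreover obtain l where "F N \<in> Lg (\<beta> N) l" using Fin by blast
    ultimately show ?thesis using Lg_zero_notD by blast
  qed
  define N where "N = (LEAST N. F N = 0)"
  have FN: "F N = 0" unfolding N_def using \<open>\<exists>N. F N = 0\<close> by (rule LeastI_ex)
  have "N \<noteq> 0"
  proof
    assume "N = 0" then show False using FN F0 v0 by simp
  qed
  then obtain m where m: "N = Suc m" by (cases N) auto
  have "F m \<noteq> 0" using not_less_Least[of m "\<lambda>N. F N = 0"] unfolding N_def[symmetric] m by auto
  moreover have "scL (- of_nat ((m+1)*(m+2))) (F m) = 0" using rec[of m] FN m by simp
  moreover have "(- of_nat ((m+1)*(m+2)) :: 'k) \<noteq> 0"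
    by (simp only: neg_equal_0_iff_equal of_nat_eq_0_iff) simp
  ultimately show False using L.scale_eq_0_iff by blast
qed

end



context LT begin

lemma main:
  fixes \<phi> :: "'g \<Rightarrow> 'o::linorder"
  assumes inj: "inj \<phi>" and mono: "\<forall>a b c. \<phi> a < \<phi> b \<longrightarrow> \<phi> (a + c) < \<phi> (b + c)"
    and a: "\<alpha> \<in> D - {0}" and x: "x \<in> Lroot Lg \<alpha>" "x \<noteq> 0"
    and y: "y \<in> Lroot Lg (- \<alpha>)" "y \<noteq> 0" and xy: "br x y \<in> Lg 0 0"
  shows "\<exists>l. x \<in> Lg \<alpha> l \<and> y \<in> Lg (- \<alpha>) (- l)"
proof -
  obtain xs where xsf: "finite {l. xs l \<noteq> 0}" and xsL: "\<And>l. xs l \<in> Lg \<alpha> l"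
    and xse: "x = (\<Sum>l\<in>{l. xs l \<noteq> 0}. xs l)" using decomp_root[OF x(1)] by blast
  obtain ys where ysf: "finite {l. ys l \<noteq> 0}" and ysL: "\<And>l. ys l \<in> Lg (-\<alpha>) l"
    and yse: "y = (\<Sum>l\<in>{l. ys l \<noteq> 0}. ys l)" using decomp_root[OF y(1)] by blast
  define Sx where "Sx = {l. xs l \<noteq> 0}"
  define Sy where "Sy = {l. ys l \<noteq> 0}"
  have Sxne: "Sx \<noteq> {}"
  proof
    assume "Sx = {}"
    then have "x = 0" using xse unfolding Sx_def by (metis sum.empty)
    then show False using x(2) by contradiction
  qed
  have Syne: "Sy \<noteq> {}"
  proof
    assume "Sy = {}"
    then have "y = 0" using yse unfolding Sy_def by (metis sum.empty)
    then show False using y(2) by contradiction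
  qed
  define P where "P = Sx \<times> Sy"
  define h where "h p = fst p + snd p" for p :: "'g \<times> 'g"
  define W where "W \<nu> = (\<Sum>p\<in>{p. p \<in> P \<and> h p = \<nu>}. br (xs (fst p)) (ys (snd p)))" for \<nu>
  have finP: "finite P" unfolding P_def Sx_def Sy_def using xsf ysf by simp
  have bxy: "br x y = (\<Sum>\<nu>\<in>h ` P. W \<nu>)"
  proof -
    have "br x y = (\<Sum>l\<in>Sx. \<Sum>m\<in>Sy. br (xs l) (ys m))"
      unfolding xse yse Sx_def Sy_def brL_sum brR_sum by (rule sum.swap)
    also have "\<dots> = (\<Sum>p\<in>P. br (xs (fst p)) (ys (snd p)))"
      unfolding P_def sum.cartesian_product by (simp add: case_prod_beta)
    also have "\<dots> = (\<Sum>\<nu>\<in>h ` P. W \<nu>)"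
      unfolding W_def by (rule sum.image_gen[OF finP])
    finally show ?thesis .
  qed
  have WL: "W \<nu> \<in> Lg 0 \<nu>" for \<nu>
    unfolding W_def
  proof (rule L.subspace_sum[OF sub])
    fix p assume "p \<in> {p. p \<in> P \<and> h p = \<nu>}"
    then have "h p = \<nu>" by simp
    have "br (xs (fst p)) (ys (snd p)) \<in> Lg (\<alpha> + - \<alpha>) (fst p + snd p)"
      by (rule brG[OF xsL ysL])
    then show "br (xs (fst p)) (ys (snd p)) \<in> Lg 0 \<nu>" using \<open>h p = \<nu>\<close> by (simp add: h_def)
  qed
  have Wz: "W \<nu> = 0" if "\<nu> \<in> h ` P" "\<nu> \<noteq> 0" for \<nu>
    using indep[of "h ` P" W 0 0 0 \<nu>] finP WL xy bxy that by auto
  have top: "l0 + m0 = 0"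
    if l0: "l0 \<in> Sx" and m0: "m0 \<in> Sy"
      and u: "\<And>l m. l \<in> Sx \<Longrightarrow> m \<in> Sy \<Longrightarrow> l + m = l0 + m0 \<Longrightarrow> l = l0 \<and> m = m0" for l0 m0
  proof (rule ccontr)
    assume ne: "l0 + m0 \<noteq> 0"
    have "{p. p \<in> P \<and> h p = l0 + m0} = {(l0, m0)}"
      using u l0 m0 unfolding P_def h_def by auto
    then have "W (l0 + m0) = br (xs l0) (ys m0)" unfolding W_def by simp
    moreover have "l0 + m0 \<in> h ` P" using l0 m0 unfolding P_def h_def by force
    ultimately have z: "br (xs l0) (ys m0) = 0" using Wz ne by simp
    have x0: "xs l0 \<noteq> 0" using l0 unfolding Sx_def by simp
    have y0: "ys m0 \<noteq> 0" using m0 unfolding Sy_def by simp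
    have "Lg \<alpha> l0 \<noteq> {0}" using xsL[of l0] x0 by blast
    have "\<forall>l. Lg \<alpha> l \<noteq> {0} \<longrightarrow>
        (\<exists>e\<in>Lg \<alpha> l. \<exists>f\<in>Lg (- \<alpha>) (- l).
           Lg \<alpha> l = range (\<lambda>t. scL t e) \<and> Lg (- \<alpha>) (- l) = range (\<lambda>t. scL t f) \<and>
           (\<forall>b\<in>root_lattice scX D. \<forall>x\<in>Lroot Lg b.
               br (br e f) x = scL (coroot scX D \<alpha> b) x))"
      by (rule bspec[OF LT2 a])
    from this[rule_format, OF \<open>Lg \<alpha> l0 \<noteq> {0}\<close>]
    obtain e f where e: "e \<in> Lg \<alpha> l0" and f: "f \<in> Lg (- \<alpha>) (- l0)"
      and sp: "Lg \<alpha> l0 = range (\<lambda>t. scL t e)"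
      and hyp: "\<forall>b\<in>root_lattice scX D. \<forall>x\<in>Lroot Lg b. br (br e f) x = scL (coroot scX D \<alpha> b) x"
      by (elim bexE conjE)
    obtain t where t: "xs l0 = scL t e" using xsL[of l0] sp by blast
    have "t \<noteq> 0" using x0 t by auto
    moreover have "br e (ys m0) \<noteq> 0" by (rule sl2[OF a e f hyp ysL y0])
    ultimately have "br (xs l0) (ys m0) \<noteq> 0" unfolding t brL_scale using L.scale_eq_0_iff by blast
    then show False using z by contradiction
  qed
  have fSx: "finite Sx" and fSy: "finite Sy" unfolding Sx_def Sy_def using xsf ysf .
  have "Max (\<phi> ` Sx) \<in> \<phi> ` Sx" using fSx Sxne by (intro Max_in) auto
  then obtain lmax where lmax: "lmax \<in> Sx" "\<phi> lmax = Max (\<phi> ` Sx)" by (metis imageE)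
  have "Min (\<phi> ` Sx) \<in> \<phi> ` Sx" using fSx Sxne by (intro Min_in) auto
  then obtain lmin where lmin: "lmin \<in> Sx" "\<phi> lmin = Min (\<phi> ` Sx)" by (metis imageE)
  have "Max (\<phi> ` Sy) \<in> \<phi> ` Sy" using fSy Syne by (intro Max_in) auto
  then obtain mmax where mmax: "mmax \<in> Sy" "\<phi> mmax = Max (\<phi> ` Sy)" by (metis imageE)
  have "Min (\<phi> ` Sy) \<in> \<phi> ` Sy" using fSy Syne by (intro Min_in) auto
  then obtain mmin where mmin: "mmin \<in> Sy" "\<phi> mmin = Min (\<phi> ` Sy)" by (metis imageE)
  have lle: "\<phi> lmin \<le> \<phi> l \<and> \<phi> l \<le> \<phi> lmax" if "l \<in> Sx" for l
    using that lmax lmin fSx by simp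
  have mle: "\<phi> mmin \<le> \<phi> m \<and> \<phi> m \<le> \<phi> mmax" if "m \<in> Sy" for m
    using that mmax mmin fSy by simp
  have s1: "lmax + mmax = 0"
    by (rule top[OF lmax(1) mmax(1)]) (use uniq_ext[OF inj mono] lle mle in blast)
  have s2: "lmin + mmin = 0"
  proof (rule top[OF lmin(1) mmin(1)])
    fix l m assume "l \<in> Sx" "m \<in> Sy" "l + m = lmin + mmin"
    then show "l = lmin \<and> m = mmin"
      using uniq_ext[OF inj mono, of lmin l mmin m] lle mle by auto
  qed
  have "lmin = lmax \<and> mmin = mmax"
    using uniq_ext[OF inj mono, of lmin lmax mmin mmax] lle[OF lmin(1)] mle[OF mmin(1)] lmax(1) mmax(1)
      s1 s2 lle[OF lmax(1)] mle[OF mmax(1)] by auto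
  then have eqs: "lmin = lmax" "mmin = mmax" by auto
  have Sx1: "Sx = {lmax}"
  proof -
    have "l = lmax" if "l \<in> Sx" for l
      using lle[OF that] eqs(1) injD[OF inj] by (metis order_antisym)
    then show ?thesis using lmax(1) by blast
  qed
  have Sy1: "Sy = {mmax}"
  proof -
    have "m = mmax" if "m \<in> Sy" for m
      using mle[OF that] eqs(2) injD[OF inj] by (metis order_antisym)
    then show ?thesis using mmax(1) by blast
  qed
  have "x = xs lmax" using xse Sx1 unfolding Sx_def by simp
  moreover have "y = ys mmax" using yse Sy1 unfolding Sy_def by simp
  moreover have "mmax = - lmax" using s1 by (simp add: eq_neg_iff_add_eq_0 add.commute)
  ultimately show ?thesis using xsL ysL by blast
qed

end

theorem lemma3p6:
  fixes scX :: "'k::field_char_0 \<Rightarrow> 'x::ab_group_add \<Rightarrow> 'x"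
    and D :: "'x set"
    and scL :: "'k \<Rightarrow> 'L::ab_group_add \<Rightarrow> 'L"
    and br :: "'L \<Rightarrow> 'L \<Rightarrow> 'L"
    and Lg :: "'x \<Rightarrow> 'g::ab_group_add \<Rightarrow> 'L set"
    and \<alpha> :: 'x and x y :: 'L
  assumes "irreducible_finite_root_system scX D"
    and "fg_free_abelian_type TYPE('g)"
    and "lie_torus scX D scL br Lg"
    and "\<alpha> \<in> D - {0}"
    and "x \<in> Lroot Lg \<alpha>" and "x \<noteq> 0"
    and "y \<in> Lroot Lg (- \<alpha>)" and "y \<noteq> 0"
    and "br x y \<in> Lg 0 0"
  shows "\<exists>l. x \<in> Lg \<alpha> l \<and> y \<in> Lg (- \<alpha>) (- l)"
proof -
  interpret LT scX D scL br Lg using assms(1,3) by unfold_locales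
  obtain \<phi> :: "'g \<Rightarrow> int list" where "inj \<phi>" "\<forall>a b c. \<phi> a < \<phi> b \<longrightarrow> \<phi> (a + c) < \<phi> (b + c)"
    using exists_order[OF assms(2)] by blast
  from main[OF this assms(4-9)] show ?thesis .
qed


end
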